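(* For every integer $t\ge1$, $$-\frac{11}{10t}<\frac{S_2(t)}{\binom{-3/2}{t}}-\frac{(-1)^t}{\binom{-3/2}{t}}\cosh\alpha+\frac{\sinh\alpha}{\alpha}<\frac1t.$$
   Context: $\alpha=\pi/6$. $(a)_m=a(a+1)\cdots(a+m-1)$ is the rising factorial ($(a)_0=1$); $\binom{x}{m}=x(x-1)\cdots(x-m+1)/m!$ for $m\ge1$, $\binom{x}{0}=1$. For $t\ge1$, $$S_2(t)=\sum_{s=0}^{t-1}(1/2-s)_{s+1}\binom{-3/2}{t-s-1}\sum_{u=0}^s\frac{(-1)^u(-s)_u}{(s+u+1)!\,(2u)!}\left(\frac{\pi^2}{36}\right)^u.$$ *)

theory Defs
  imports Complex_Main
begin

definition alpha :: real where "alpha = pi / 6"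

definition S2 :: "nat \<Rightarrow> real" where
  "S2 t = (\<Sum>s<t. pochhammer (1/2 - real s) (s+1) * ((-3/2) gchoose (t - s - 1)) *
      (\<Sum>u\<le>s. (-1)^u * pochhammer (- real s) u / (fact (s+u+1) * fact (2*u)) * (pi^2/36)^u))"

end

theory Submission imports Defs "HOL-Computational_Algebra.Formal_Power_Series" begin

definition bt :: "nat \<Rightarrow> real" where "bt m = (-1)^m * ((-3/2) gchoose m)"

lemma gch_Suc: "(a::real) gchoose (Suc k) = (a - of_nat k) / (of_nat k + 1) * (a gchoose k)"
proof -
  have "a * (a gchoose k) = of_nat k * (a gchoose k) + of_nat (Suc k) * (a gchoose (Suc k))"
    by (rule gbinomial_mult_1)
  then show ?thesis by (simp add: field_simps)
qed

lemma bt_0[simp]: "bt 0 = 1" by (simp add: bt_def)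

lemma bt_Suc: "bt (Suc m) = bt m * (2 * of_nat m + 3) / (2 * of_nat m + 2)"
  unfolding bt_def gch_Suc by (simp add: field_simps)

lemma bt_pos: "bt m > 0"
  by (induction m) (simp_all add: bt_Suc)

lemma bt_diff: "2 * (bt (Suc t) - bt t) = bt t / (of_nat t + 1)"
  unfolding bt_Suc by (simp add: field_simps)

lemma g_mono: "bt (Suc t) / (of_nat (Suc t) + 1) \<le> bt t / (of_nat t + 1)"
proof -
  have p: "bt t > 0" by (rule bt_pos)
  have "bt (Suc t) / (of_nat (Suc t) + 1) = bt t * ((2 * of_nat t + 3) / ((2 * of_nat t + 2) * (of_nat t + 2)))"
    unfolding bt_Suc by (simp add: field_simps)
  also have "\<dots> \<le> bt t * (1 / (of_nat t + 1))"
    using p by (intro mult_left_mono) (auto simp: divide_simps algebra_simps, smt (verit) mult_nonneg_nonneg of_nat_0_le_iff)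
  finally show ?thesis by simp
qed

definition cc :: "nat \<Rightarrow> nat \<Rightarrow> real" where
  "cc k n = (if k = 0 then (if n = 0 then 1 else 0) else if n < k then 0
     else of_nat k * fact (2*n-k-1) / (fact n * fact (n-k) * 2^(2*n-k)))"

lemma cc_formula: "cc (Suc i) (Suc i + j) = of_nat (Suc i) * fact (i + 2*j) / (fact (Suc i + j) * fact j * 2^(Suc i + 2*j))"
proof -
  have "2 * (Suc i + j) - Suc i - 1 = i + 2*j" by simp
  moreover have "2 * (Suc i + j) - Suc i = Suc i + 2*j" by simp
  ultimately show ?thesis unfolding cc_def by simp
qed

lemma cc_zero: "n < k \<Longrightarrow> cc k n = 0" by (simp add: cc_def)

lemma cc_rec: "cc (k+2) (n+1) = 2 * cc (k+1) (n+1) - cc k n"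
proof (cases k)
  case 0
  show ?thesis
  proof (cases n)
    case 0
    then show ?thesis using \<open>k=0\<close> by (simp add: cc_def)
  next
    case (Suc m)
    have a: "cc 2 (m+2) = 2 * fact (1 + 2*m) / (fact (2+m) * fact m * 2^(2+2*m))"
      using cc_formula[of 1 m] by (simp add: numeral_2_eq_2 add.commute)
    have b: "cc 1 (m+2) = fact (2*m+2) / (fact (m+2) * fact (m+1) * 2^(2*m+3))"
      using cc_formula[of 0 "m+1"] by (simp add: numeral_3_eq_3 numeral_2_eq_2 add.commute)
    have c: "cc 0 (m+1) = 0" by (simp add: cc_def)
    have f1: "fact (2*m+2) = (2*of_nat m+2) * (fact (2*m+1) :: real)"
      by (simp add: fact_Suc[of "2*m+1", simplified] algebra_simps)
    have f2: "fact (m+1) = (of_nat m+1) * (fact m :: real)" by simp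
    have "cc 2 (m+2) = 2*cc 1 (m+2) - cc 0 (m+1)"
      unfolding a b c f1 f2 by (simp add: divide_simps power_add del: fact_Suc)
    then show ?thesis using \<open>k=0\<close> Suc by (simp add: numeral_2_eq_2)
  qed
next
  case (Suc i)
  consider (lt) "n < k" | (eq) "n = k" | (gt) j where "n = Suc k + j"
    by (metis add_Suc less_imp_Suc_add linorder_neqE_nat)
  then show ?thesis
  proof cases
    case lt
    then show ?thesis by (simp add: cc_def)
  next
    case eq
    have a: "cc (i+3) (i+2) = 0" by (simp add: cc_def)
    have b: "cc (i+2) (i+2) = 1 / 2^(i+2)"
    proof -
      have "cc (i+2) (i+2) = of_nat (i+2) * fact (i+1) / (fact (i+2) * 2^(i+2))"
        using cc_formula[of "i+1" 0] by (simp del: fact_Suc)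
      also have "fact (i+2) = of_nat (i+2) * (fact (i+1)::real)"
        by (metis add_2_eq_Suc' add.commute fact_Suc of_nat_fact of_nat_mult plus_1_eq_Suc)
      finally show ?thesis by (simp del: fact_Suc)
    qed
    have c: "cc (i+1) (i+1) = 1 / 2^(i+1)"
    proof -
      have "cc (i+1) (i+1) = of_nat (i+1) * fact i / (fact (i+1) * 2^(i+1))"
        using cc_formula[of "i" 0] by (simp del: fact_Suc)
      also have "fact (i+1) = of_nat (i+1) * (fact i::real)"
        by simp
      finally show ?thesis by (simp del: fact_Suc)
    qed
    have "cc (i+3) (i+2) = 2*cc (i+2) (i+2) - cc (i+1) (i+1)"
      unfolding a b c by (simp add: power_Suc)
    then show ?thesis using eq Suc by (simp add: eval_nat_numeral)
  next
    case gt
    have a: "cc (i+3) (i+3+j) = of_nat (i+3) * fact (i+2+2*j) / (fact (i+3+j) * fact j * 2^(i+3+2*j))"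
      using cc_formula[of "i+2" j] by (simp add: eval_nat_numeral add.commute add.left_commute)
    have b: "cc (i+2) (i+3+j) = of_nat (i+2) * fact (i+3+2*j) / (fact (i+3+j) * fact (j+1) * 2^(i+4+2*j))"
      using cc_formula[of "i+1" "j+1"] by (simp add: eval_nat_numeral add.commute add.left_commute)
    have c: "cc (i+1) (i+2+j) = of_nat (i+1) * fact (i+2+2*j) / (fact (i+2+j) * fact (j+1) * 2^(i+3+2*j))"
      using cc_formula[of "i" "j+1"] by (simp add: eval_nat_numeral add.commute add.left_commute)
    have f1: "fact (i+3+2*j) = (of_nat i + 3 + 2*of_nat j) * (fact (i+2+2*j) :: real)"
      using fact_Suc[of "i+2+2*j"] by (simp add: eval_nat_numeral algebra_simps)
    have f2: "fact (i+3+j) = (of_nat i + 3 + of_nat j) * (fact (i+2+j) :: real)"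
      using fact_Suc[of "i+2+j"] by (simp add: eval_nat_numeral algebra_simps)
    have f3: "fact (j+1) = (of_nat j + 1) * (fact j :: real)" by simp
    have e1: "k + 2 = i + 3" "n + 1 = i + 3 + j" "k + 1 = i + 2" "k = i + 1" "n = i + 2 + j"
      using gt Suc by auto
    have "cc (i+3) (i+3+j) = 2*cc (i+2) (i+3+j) - cc (i+1) (i+2+j)"
      unfolding a b c f1 f2 f3
      by (simp add: divide_simps power_add del: fact_Suc) (simp add: algebra_simps)
    then show ?thesis using gt Suc by (simp add: eval_nat_numeral)
  qed
qed

definition Cv :: "nat \<Rightarrow> nat \<Rightarrow> real" where
  "Cv k m = (\<Sum>n\<le>m. cc k n * bt (m - n))"

lemma cc_k0: "k > 0 \<Longrightarrow> cc k 0 = 0" by (simp add: cc_def)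

lemma Cv_rec: "Cv (k+2) (m+1) = 2 * Cv (k+1) (m+1) - Cv k m"
proof -
  have "Cv (k+2) (m+1) = (\<Sum>n\<le>m. cc (k+2) (Suc n) * bt (m - n))"
    unfolding Cv_def Suc_eq_plus1[symmetric] sum.atMost_Suc_shift by (simp add: cc_k0)
  also have "\<dots> = (\<Sum>n\<le>m. 2 * (cc (k+1) (Suc n) * bt (m - n)) - cc k n * bt (m - n))"
    by (intro sum.cong refl) (simp add: cc_rec[simplified] algebra_simps)
  also have "\<dots> = 2 * (\<Sum>n\<le>m. cc (k+1) (Suc n) * bt (m - n)) - Cv k m"
    unfolding Cv_def by (simp add: sum_subtractf sum_distrib_left)
  also have "(\<Sum>n\<le>m. cc (k+1) (Suc n) * bt (m - n)) = Cv (k+1) (m+1)"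
    unfolding Cv_def Suc_eq_plus1[symmetric] sum.atMost_Suc_shift by (simp add: cc_k0)
  finally show ?thesis .
qed

lemma Cv0: "Cv 0 m = bt m"
proof -
  have "Cv 0 m = (\<Sum>n\<le>m. if n = 0 then bt m else 0)"
    unfolding Cv_def by (intro sum.cong refl) (simp add: cc_def)
  also have "\<dots> = bt m" by (simp add: sum.delta)
  finally show ?thesis .
qed

lemma cc1: "cc 1 (Suc j) = - ((-1)^(Suc j) * ((1/2::real) gchoose (Suc j)))"
proof (induction j)
  case 0
  then show ?case by (simp add: cc_def)
next
  case (Suc j)
  have a: "cc 1 (Suc j) = fact (2*j) / (fact (Suc j) * fact j * 2^(Suc (2*j)))"
    using cc_formula[of 0 j] by simp
  have b: "cc 1 (Suc (Suc j)) = fact (2*j+2) / (fact (Suc (Suc j)) * fact (Suc j) * 2^(2*j+3))"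
    using cc_formula[of 0 "Suc j"] by (simp add: eval_nat_numeral)
  have f: "fact (2*j+2) = (2*of_nat j+2) * (2 * of_nat j + 1) * (fact (2*j)::real)"
    using fact_Suc[of "2*j+1"] fact_Suc[of "2*j"] by (simp add: algebra_simps)
  have "cc 1 (Suc (Suc j)) = cc 1 (Suc j) * ((2*of_nat j+1) / (2*(of_nat j+2)))"
    unfolding a b f by (simp add: divide_simps power_add del: fact_Suc) (simp add: algebra_simps)
  also have "\<dots> = - ((-1)^(Suc (Suc j)) * ((1/2::real) gchoose (Suc (Suc j))))"
    unfolding Suc gch_Suc[of "1/2" "Suc j"] by (simp add: field_simps)
  finally show ?case .
qed

lemma gch_m1: "((-1::real) gchoose m) = (-1)^m"
  by (simp add: gbinomial_pochhammer pochhammer_fact[symmetric])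

lemma Cv1: "Cv 1 m = bt m - 1"
proof -
  have "Cv 1 m = (\<Sum>n\<le>m. (-((-1)^n * ((1/2::real) gchoose n)) + (if n = 0 then 1 else 0)) * bt (m - n))"
    unfolding Cv_def
  proof (intro sum.cong refl)
    fix n assume "n \<in> {..m}"
    show "cc 1 n * bt (m - n) = (-((-1)^n * ((1/2::real) gchoose n)) + (if n = 0 then 1 else 0)) * bt (m - n)"
      by (cases n) (simp add: cc_def, simp only: cc1, simp)
  qed
  also have "\<dots> = - (\<Sum>n\<le>m. (-1)^m * (((1/2::real) gchoose n) * ((-3/2) gchoose (m - n)))) + bt m"
  proof -
    have "\<And>n. n \<le> m \<Longrightarrow> ((-1::real)^n * ((1/2::real) gchoose n)) * bt (m - n) = (-1)^m * (((1/2::real) gchoose n) * ((-3/2) gchoose (m - n)))"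
    proof -
      fix n assume "n \<le> m"
      then have "(-1::real)^n * (-1)^(m-n) = (-1)^m" by (simp add: power_add[symmetric])
      then show "((-1::real)^n * ((1/2::real) gchoose n)) * bt (m - n) = (-1)^m * (((1/2::real) gchoose n) * ((-3/2) gchoose (m - n)))"
        unfolding bt_def by (metis (no_types, lifting) mult.assoc mult.left_commute)
    qed
    then have e: "(\<Sum>n\<le>m. ((-1::real)^n * ((1/2::real) gchoose n)) * bt (m - n)) = (\<Sum>n\<le>m. (-1)^m * (((1/2::real) gchoose n) * ((-3/2) gchoose (m - n))))"
      by (intro sum.cong refl) simp
    have d: "(\<Sum>n\<le>m. (if n = 0 then 1 else 0) * bt (m - n)) = bt m"
    proof -
      have "(\<Sum>n\<le>m. (if n = 0 then 1 else 0) * bt (m - n)) = (\<Sum>n\<le>m. if n = 0 then bt m else 0)"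
        by (intro sum.cong refl) simp
      then show ?thesis by (simp add: sum.delta)
    qed
    show ?thesis unfolding e[symmetric] d[symmetric]
      by (simp add: left_diff_distrib sum_subtractf)
  qed
  also have "(\<Sum>n\<le>m. (-1)^m * (((1/2::real) gchoose n) * ((-3/2) gchoose (m - n)))) = (-1)^m * (-1)^m"
    using gbinomial_Vandermonde[of "1/2::real" "-3/2" m] gch_m1[of m]
    by (simp add: sum_distrib_left[symmetric] atLeast0AtMost)
  finally show ?thesis by (simp add: power_add[symmetric] mult_2[symmetric])
qed

definition dl :: "nat \<Rightarrow> nat \<Rightarrow> real" where
  "dl u t = Cv (2*u) (t+u) - bt t + 2 * of_nat u"
definition ep :: "nat \<Rightarrow> nat \<Rightarrow> real" where
  "ep u t = Cv (2*u+1) (t+u) - bt t + (2 * of_nat u + 1)"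
definition gg :: "nat \<Rightarrow> real" where "gg t = bt t / (of_nat t + 1)"

lemma gg_pos: "gg t > 0" using bt_pos[of t] by (simp add: gg_def)
lemma gg_mono: "gg (Suc t) \<le> gg t" using g_mono[of t] by (simp add: gg_def)

lemma dl_rec: "dl (Suc u) t = 2 * ep u (Suc t) + gg t - dl u t"
proof -
  have "Cv (2*Suc u) (t + Suc u) = 2 * Cv (2*u+1) (Suc t + u) - Cv (2*u) (t+u)"
    using Cv_rec[of "2*u" "t+u"] by (simp add: algebra_simps)
  then show ?thesis using bt_diff[of t] unfolding dl_def ep_def gg_def by (simp add: algebra_simps)
qed

lemma ep_rec: "ep (Suc u) t = 2 * dl (Suc u) t - ep u t"
proof -
  have "Cv (2*Suc u+1) (t + Suc u) = 2 * Cv (2*Suc u) (t + Suc u) - Cv (2*u+1) (t+u)"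
    using Cv_rec[of "2*u+1" "t+u"] by (simp add: algebra_simps)
  then show ?thesis unfolding dl_def ep_def by (simp add: algebra_simps)
qed

lemma ep_bound: "\<forall>t. \<bar>dl u t\<bar> \<le> (8^u - 1)/2 * gg t \<and> \<bar>ep u t\<bar> \<le> (8^u - 1) * gg t"
proof (induction u)
  case 0
  then show ?case using Cv1 by (simp add: dl_def ep_def Cv0)
next
  case (Suc u)
  show ?case
  proof
    fix t
    have g: "gg t > 0" by (rule gg_pos)
    have h1: "\<bar>ep u (Suc t)\<bar> \<le> (8^u - 1) * gg t"
    proof -
      have "\<bar>ep u (Suc t)\<bar> \<le> (8^u - 1) * gg (Suc t)" using Suc by blast
      also have "\<dots> \<le> (8^u - 1) * gg t"
        by (intro mult_left_mono gg_mono) simp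
      finally show ?thesis .
    qed
    have h2: "\<bar>dl u t\<bar> \<le> (8^u - 1)/2 * gg t" "\<bar>ep u t\<bar> \<le> (8^u - 1) * gg t" using Suc by blast+
    have d: "\<bar>dl (Suc u) t\<bar> \<le> (5/2 * 8^u - 3/2) * gg t"
    proof -
      have "\<bar>dl (Suc u) t\<bar> \<le> 2*\<bar>ep u (Suc t)\<bar> + gg t + \<bar>dl u t\<bar>"
        unfolding dl_rec using g by (smt (verit))
      then show ?thesis using h1 h2 by (simp add: algebra_simps)
    qed
    have e: "\<bar>ep (Suc u) t\<bar> \<le> (6 * 8^u - 4) * gg t"
    proof -
      have "\<bar>ep (Suc u) t\<bar> \<le> 2*\<bar>dl (Suc u) t\<bar> + \<bar>ep u t\<bar>"
        unfolding ep_rec by (smt (verit))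
      then show ?thesis using d h2 by (simp add: algebra_simps)
    qed
    have p: "(1::real) \<le> 8^u" by simp
    show "\<bar>dl (Suc u) t\<bar> \<le> (8^Suc u - 1)/2 * gg t \<and> \<bar>ep (Suc u) t\<bar> \<le> (8^Suc u - 1) * gg t"
    proof
      have "(5/2 * 8^u - 3/2) * gg t \<le> (8^Suc u - 1)/2 * gg t"
        using g p by (intro mult_right_mono) auto
      then show "\<bar>dl (Suc u) t\<bar> \<le> (8^Suc u - 1)/2 * gg t" using d by linarith
      have "(6 * 8^u - 4) * gg t \<le> (8^Suc u - 1) * gg t"
        using g p by (intro mult_right_mono) auto
      then show "\<bar>ep (Suc u) t\<bar> \<le> (8^Suc u - 1) * gg t" using e by linarith
    qed
  qed
qed

lemma poch_half: "pochhammer (1/2 - real s) (s+1) = (-1)^s * cc 1 (Suc s) * fact (Suc s)"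
proof -
  have "((1/2::real) gchoose (s+1)) = pochhammer (1/2 - real s) (s+1) / fact (s+1)"
    using gbinomial_pochhammer'[of "1/2::real" "s+1"] by simp
  then have "pochhammer (1/2 - real s) (s+1) = fact (Suc s) * ((1/2::real) gchoose (Suc s))"
    by simp
  also have "((1/2::real) gchoose (Suc s)) = (-1)^s * cc 1 (Suc s)"
    unfolding cc1 by simp
  finally show ?thesis by simp
qed

lemma poch_minus_s: "u \<le> s \<Longrightarrow> (-1)^u * pochhammer (- real s) u = fact s / fact (s - u)"
proof -
  assume us: "u \<le> s"
  have "(-1)^u * pochhammer (- real s) u = pochhammer (real s - real u + 1) u"
    unfolding pochhammer_minus by simp
  also have "\<dots> = fact u * (real s gchoose u)"
    using gbinomial_pochhammer'[of "real s" u] by simp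
  also have "\<dots> = fact s / fact (s - u)"
    unfolding binomial_gbinomial[symmetric] binomial_fact[OF us] by simp
  finally show ?thesis .
qed

lemma cc_odd: "u \<le> s \<Longrightarrow> cc (2*u+1) (s+u+1) = (2*of_nat u+1) * fact (2*s) / (fact (s+u+1) * fact (s-u) * 2^(2*s+1))"
proof -
  assume us: "u \<le> s"
  have "cc (Suc (2*u)) (Suc (2*u) + (s-u)) = of_nat (Suc (2*u)) * fact (2*u + 2*(s-u)) / (fact (Suc (2*u) + (s-u)) * fact (s-u) * 2^(Suc (2*u) + 2*(s-u)))"
    by (rule cc_formula)
  moreover have "Suc (2*u) + (s-u) = s+u+1" "2*u + 2*(s-u) = 2*s" "Suc (2*u) + 2*(s-u) = 2*s+1"
    using us by auto
  ultimately show ?thesis by (simp add: ac_simps)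
qed

lemma core: "u \<le> s \<Longrightarrow> cc 1 (Suc s) * fact (Suc s) * (fact s / fact (s - u)) / (fact (s+u+1) * fact (2*u))
   = cc (2*u+1) (s+u+1) / fact (2*u+1)"
proof -
  assume us: "u \<le> s"
  have c1: "cc 1 (Suc s) = fact (2*s) / (fact (Suc s) * fact s * 2^(Suc (2*s)))"
    using cc_formula[of 0 s] by simp
  have f: "fact (2*u+1) = (2*of_nat u+1) * (fact (2*u)::real)" by simp
  show ?thesis unfolding c1 cc_odd[OF us] f
    by (simp add: divide_simps del: fact_Suc)
qed

lemma term_eq:
  assumes us: "u \<le> s" and st: "s < t"
  shows "pochhammer (1/2 - real s) (s+1) * ((-3/2) gchoose (t - s - 1)) *
      ((-1)^u * pochhammer (- real s) u / (fact (s+u+1) * fact (2*u)) * (x::real)^u)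
    = (-1)^(t-1) * (cc (2*u+1) (s+u+1) * bt (t-1-s)) * (x^u / fact (2*u+1))"
proof -
  have g: "((-3/2::real) gchoose (t - s - 1)) = (-1)^(t-s-1) * bt (t-1-s)"
    unfolding bt_def by (simp add: power_mult_distrib[symmetric])
  have sg: "(-1::real)^s * (-1)^(t-s-1) = (-1)^(t-1)"
    using st by (simp add: power_add[symmetric])
  have "pochhammer (1/2 - real s) (s+1) * ((-3/2) gchoose (t - s - 1)) *
      ((-1)^u * pochhammer (- real s) u / (fact (s+u+1) * fact (2*u)) * (x::real)^u)
     = ((-1::real)^s * (-1)^(t-s-1)) * (cc 1 (Suc s) * fact (Suc s) * (fact s / fact (s - u)) / (fact (s+u+1) * fact (2*u))) * bt (t-1-s) * x^u"
    unfolding poch_half g poch_minus_s[OF us, symmetric] by (simp add: field_simps)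
  also have "\<dots> = (-1)^(t-1) * (cc (2*u+1) (s+u+1) * bt (t-1-s)) * (x^u / fact (2*u+1))"
    unfolding sg core[OF us] by (simp add: field_simps)
  finally show ?thesis .
qed

lemma Cv_shift: "(\<Sum>s<t. cc (2*u+1) (s+u+1) * bt (t-1-s)) = Cv (2*u+1) (t+u)"
proof -
  let ?g = "\<lambda>n. cc (2*u+1) n * bt (t+u-n)"
  let ?h = "\<lambda>s. s+u+1"
  have inj: "inj_on ?h {..<t}" by (auto simp: inj_on_def)
  have sub: "?h ` {..<t} \<subseteq> {..t+u}" by auto
  have z: "\<forall>n\<in>{..t+u} - ?h ` {..<t}. ?g n = 0"
  proof
    fix n assume n: "n \<in> {..t+u} - ?h ` {..<t}"
    have "n \<le> u"
    proof (rule ccontr)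
      assume "\<not> n \<le> u"
      then have "n = ?h (n-u-1)" "n - u - 1 < t" using n by auto
      then show False using n by blast
    qed
    then show "?g n = 0" by (simp add: cc_zero)
  qed
  have "Cv (2*u+1) (t+u) = sum ?g (?h ` {..<t})"
    unfolding Cv_def using sum.mono_neutral_right[OF _ sub z] by simp
  also have "\<dots> = (\<Sum>s<t. ?g (?h s))"
    by (rule sum.reindex_cong[OF inj refl]) simp
  also have "\<dots> = (\<Sum>s<t. cc (2*u+1) (s+u+1) * bt (t-1-s))"
    by (intro sum.cong refl) (simp add: algebra_simps)
  finally show ?thesis by simp
qed

lemma S2_eq: "S2 t = (-1)^(t-1) * (\<Sum>u<t. (pi^2/36)^u / fact (2*u+1) * Cv (2*u+1) (t+u))"
proof -
  let ?x = "pi^2/36::real"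
  let ?F = "\<lambda>s u. (-1)^(t-1) * (cc (2*u+1) (s+u+1) * bt (t-1-s)) * (?x^u / fact (2*u+1))"
  have "S2 t = (\<Sum>s<t. \<Sum>u\<le>s. ?F s u)"
    unfolding S2_def sum_distrib_left
    by (intro sum.cong refl term_eq) auto
  also have "\<dots> = (\<Sum>s<t. \<Sum>u<t. ?F s u)"
  proof (rule sum.cong[OF refl])
    fix s assume s: "s \<in> {..<t}"
    show "(\<Sum>u\<le>s. ?F s u) = (\<Sum>u<t. ?F s u)"
      using s by (intro sum.mono_neutral_left) (auto simp: cc_zero)
  qed
  also have "\<dots> = (\<Sum>u<t. \<Sum>s<t. ?F s u)" by (rule sum.swap)
  also have "\<dots> = (\<Sum>u<t. (-1)^(t-1) * (?x^u / fact (2*u+1) * (\<Sum>s<t. cc (2*u+1) (s+u+1) * bt (t-1-s))))"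
  proof (rule sum.cong[OF refl])
    fix u
    have "\<And>s. ?F s u = ((-1)^(t-1) * (?x^u / fact (2*u+1))) * (cc (2*u+1) (s+u+1) * bt (t-1-s))"
      by (simp only: mult_ac)
    then show "(\<Sum>s<t. ?F s u) = (-1)^(t-1) * (?x^u / fact (2*u+1) * (\<Sum>s<t. cc (2*u+1) (s+u+1) * bt (t-1-s)))"
      by (simp only: sum_distrib_left[symmetric] mult.assoc)
  qed
  also have "\<dots> = (-1)^(t-1) * (\<Sum>u<t. ?x^u / fact (2*u+1) * Cv (2*u+1) (t+u))"
    unfolding Cv_shift by (simp only: sum_distrib_left)
  finally show ?thesis .
qed

lemma Cv_zero: "t \<le> u \<Longrightarrow> Cv (2*u+1) (t+u) = 0"
  unfolding Cv_def by (intro sum.neutral) (auto simp: cc_zero)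

lemma cosh_ser: "(\<lambda>u. (a^2)^u / fact (2*u)) sums cosh (a::real)"
proof -
  have "(\<lambda>n. sum (\<lambda>n. if even n then a ^ n /\<^sub>R fact n else 0) {n * 2 ..< n * 2 + 2}) sums cosh a"
    by (rule sums_group[OF cosh_converges]) simp
  moreover have "\<And>n. sum (\<lambda>n. if even n then a ^ n /\<^sub>R fact n else 0) {n * 2 ..< n * 2 + 2} = (a^2)^n / fact (2*n)"
  proof -
    fix n
    have e: "{n * 2 ..< n * 2 + 2} = {n*2, Suc (n*2)}" by auto
    show "sum (\<lambda>n. if even n then a ^ n /\<^sub>R fact n else 0) {n * 2 ..< n * 2 + 2} = (a^2)^n / fact (2*n)"
      unfolding e by (simp add: power_mult[symmetric] mult.commute divide_inverse)
  qed
  ultimately show ?thesis by simp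
qed

lemma sinh_ser: "a \<noteq> 0 \<Longrightarrow> (\<lambda>u. (a^2)^u / fact (2*u+1)) sums (sinh (a::real) / a)"
proof -
  assume a: "a \<noteq> 0"
  have "(\<lambda>n. sum (\<lambda>n. if even n then 0 else a ^ n /\<^sub>R fact n) {n * 2 ..< n * 2 + 2}) sums sinh a"
    by (rule sums_group[OF sinh_converges]) simp
  moreover have "\<And>n. sum (\<lambda>n. if even n then 0 else a ^ n /\<^sub>R fact n) {n * 2 ..< n * 2 + 2} = (a^2)^n / fact (2*n+1) * a"
  proof -
    fix n
    have e: "{n * 2 ..< n * 2 + 2} = {n*2, Suc (n*2)}" by auto
    show "sum (\<lambda>n. if even n then 0 else a ^ n /\<^sub>R fact n) {n * 2 ..< n * 2 + 2} = (a^2)^n / fact (2*n+1) * a"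
      unfolding e by (simp add: power_mult[symmetric] mult.commute divide_inverse del: fact_Suc)
  qed
  ultimately have "(\<lambda>n. (a^2)^n / fact (2*n+1) * a) sums sinh a" by simp
  then have "(\<lambda>n. (a^2)^n / fact (2*n+1) * a / a) sums (sinh a / a)" by (rule sums_divide)
  then show ?thesis using a by simp
qed

lemma fact_bound: "u \<ge> 1 \<Longrightarrow> 3 * (20::real)^u \<le> 10 * fact (2*u+1)"
proof (induction u rule: dec_induct)
  case base
  then show ?case by (simp add: eval_nat_numeral)
next
  case (step u)
  have "3 * (20::real)^Suc u = 20 * (3 * 20^u)" by simp
  also have "\<dots> \<le> 20 * (10 * fact (2*u+1))" using step.IH by (intro mult_left_mono) auto
  also have "\<dots> \<le> (2*of_nat u+2)*(2*of_nat u+3) * (10 * fact (2*u+1))"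
  proof (rule mult_right_mono)
    have "(1::real) \<le> of_nat u" using step by simp
    then have "(4::real) * 5 \<le> (2*of_nat u+2)*(2*of_nat u+3::real)" by (intro mult_mono) auto
    then show "20 \<le> (2*of_nat u+2)*(2*of_nat u+3::real)" by simp
  qed simp
  also have "\<dots> = 10 * fact (2 * Suc u + 1)"
    by (simp add: algebra_simps)
  finally show ?case .
qed

lemma alg: "F > 0 \<Longrightarrow> B > 0 \<Longrightarrow> K > 0 \<Longrightarrow>
  - (X / (K*F) * C) / B - X / F / B + X / (K*F) = - (X * (C - B + K)) / ((K*F) * B)" for F B K X C :: real
  by (simp add: field_simps)



lemma alg2: "b > 0 \<Longrightarrow> F > 0 \<Longrightarrow> T > 0 \<Longrightarrow> A * (C * (b / T)) / (F * b) = A * C / F / T" for b F T A C :: real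
  by (simp add: field_simps)

theorem mainTheorem11:
  fixes t :: nat
  assumes "t \<ge> 1"
  shows "- 11 / (10 * real t) <
           S2 t / ((-3/2) gchoose t) - (-1)^t / ((-3/2) gchoose t) * cosh alpha + sinh alpha / alpha
         \<and> S2 t / ((-3/2) gchoose t) - (-1)^t / ((-3/2) gchoose t) * cosh alpha + sinh alpha / alpha
           < 1 / real t"
proof -
  define x where "x = pi^2/36"
  define Q where "Q = S2 t / ((-3/2) gchoose t) - (-1)^t / ((-3/2) gchoose t) * cosh alpha + sinh alpha / alpha"
  have a2: "alpha^2 = x" unfolding alpha_def x_def by (simp add: power_divide)
  have apos: "alpha > 0" unfolding alpha_def by simp
  have b: "bt t > 0" by (rule bt_pos)
  have G: "((-3/2::real) gchoose t) = (-1)^t * bt t"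
    unfolding bt_def by (simp add: power_mult_distrib[symmetric])
  obtain t' where t': "t = Suc t'" using assms by (cases t) auto
  have S2G: "S2 t / ((-3/2) gchoose t) = (\<Sum>u<t. - (x^u / fact (2*u+1) * Cv (2*u+1) (t+u)) / bt t)"
  proof -
    have sg: "(-1::real)^(t-1) = - ((-1)^t)" using t' by simp
    have "S2 t / ((-3/2) gchoose t) = (-1)^(t-1) * (\<Sum>u<t. x^u / fact (2*u+1) * Cv (2*u+1) (t+u)) / ((-1)^t * bt t)"
      by (simp only: S2_eq G x_def)
    also have "\<dots> = - (\<Sum>u<t. x^u / fact (2*u+1) * Cv (2*u+1) (t+u)) / bt t"
      unfolding sg by (simp add: field_simps)
    also have "\<dots> = (\<Sum>u<t. - (x^u / fact (2*u+1) * Cv (2*u+1) (t+u)) / bt t)"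
      by (simp add: sum_negf sum_divide_distrib)
    finally show ?thesis .
  qed
  have A: "(\<lambda>u. - (x^u / fact (2*u+1) * Cv (2*u+1) (t+u)) / bt t) sums (S2 t / ((-3/2) gchoose t))"
    unfolding S2G using Cv_zero[simplified] by (intro sums_finite) (auto simp: not_less)
  have B: "(\<lambda>u. x^u / fact (2*u) / bt t) sums (cosh alpha / bt t)"
    using sums_divide[OF cosh_ser[of alpha], of "bt t"] unfolding a2 .
  have C: "(\<lambda>u. x^u / fact (2*u+1)) sums (sinh alpha / alpha)"
    using sinh_ser[of alpha] apos unfolding a2 by simp
  have Qe: "Q = S2 t / ((-3/2) gchoose t) - cosh alpha / bt t + sinh alpha / alpha"
    unfolding Q_def G by (simp add: power_mult_distrib[symmetric])
  have "(\<lambda>u. - (x^u / fact (2*u+1) * Cv (2*u+1) (t+u)) / bt t - x^u / fact (2*u) / bt t + x^u / fact (2*u+1)) sums Q"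
    unfolding Qe by (intro sums_add sums_diff A B C)
  moreover have "\<And>u. - (x^u / fact (2*u+1) * Cv (2*u+1) (t+u)) / bt t - x^u / fact (2*u) / bt t + x^u / fact (2*u+1)
      = - (x^u * ep u t) / (fact (2*u+1) * bt t)"
  proof -
    fix u
    have f: "fact (2*u+1) = (2*of_nat u+1) * (fact (2*u)::real)" by simp
    have p: "(2*of_nat u+1::real) > 0" by simp
    show "- (x^u / fact (2*u+1) * Cv (2*u+1) (t+u)) / bt t - x^u / fact (2*u) / bt t + x^u / fact (2*u+1)
      = - (x^u * ep u t) / (fact (2*u+1) * bt t)"
      using alg[of "fact (2*u)" "bt t" "2*of_nat u+1" "x^u" "Cv (2*u+1) (t+u)"] b p
      unfolding ep_def f by simp
  qed
  ultimately have Qs: "(\<lambda>u. - (x^u * ep u t) / (fact (2*u+1) * bt t)) sums Q" by simp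
  define q where "q = pi^2/90"
  have q0: "0 < q" unfolding q_def by simp
  have q1: "q < 16/90" unfolding q_def using pi_less_4 pi_gt_zero
  proof -
    have "pi^2 < (4::real)^2" using pi_less_4 pi_gt_zero by (intro power_strict_mono) auto
    then show "pi^2/90 < 16/90" by simp
  qed
  define h where "h u = (if u = 0 then 0 else 10/3 * q^u / (of_nat t + 1))" for u
  have hs: "h sums (10/3 / (1 - q) / (of_nat t + 1) - 10/3 / (of_nat t + 1))"
  proof -
    have "(\<lambda>u. q^u) sums (1 / (1 - q))" using geometric_sums[of q] q0 q1 by simp
    then have s1: "(\<lambda>u. 10/3 * q^u / (of_nat t + 1)) sums (10/3 * (1 / (1 - q)) / (of_nat t + 1))"
      by (intro sums_divide sums_mult)
    have s2: "(\<lambda>u. if u = 0 then 10/3 * q^u / (of_nat t + 1) else 0) sums (10/3 * q^0 / (of_nat t + 1))"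
      by (rule sums_single)
    have "(\<lambda>u. 10/3 * q^u / (of_nat t + 1) - (if u = 0 then 10/3 * q^u / (of_nat t + 1) else 0)) sums
       (10/3 * (1 / (1 - q)) / (of_nat t + 1) - 10/3 * q^0 / (of_nat t + 1))"
      by (rule sums_diff[OF s1 s2])
    moreover have "(\<lambda>u. 10/3 * q^u / (of_nat t + 1) - (if u = 0 then 10/3 * q^u / (of_nat t + 1) else 0)) = h"
      by (auto simp: h_def fun_eq_iff)
    ultimately show ?thesis by simp
  qed
  have tb: "\<bar>- (x^u * ep u t) / (fact (2*u+1) * bt t)\<bar> \<le> h u" for u
  proof (cases "u = 0")
    case True
    have "\<bar>ep 0 t\<bar> \<le> 0" using ep_bound[of 0] by simp
    then show ?thesis using True by (simp add: h_def)
  next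
    case False
    have x0: "x \<ge> 0" unfolding x_def by simp
    have e: "\<bar>ep u t\<bar> \<le> (8^u - 1) * gg t" using ep_bound[of u] by blast
    have "\<bar>- (x^u * ep u t) / (fact (2*u+1) * bt t)\<bar> = x^u * \<bar>ep u t\<bar> / (fact (2*u+1) * bt t)"
      using b x0 by (simp add: abs_mult)
    also have "\<dots> \<le> x^u * ((8^u - 1) * gg t) / (fact (2*u+1) * bt t)"
      using b x0 e by (intro divide_right_mono mult_left_mono) auto
    also have "\<dots> = x^u * (8^u - 1) / fact (2*u+1) / (of_nat t + 1)"
      using b unfolding gg_def by (intro alg2) auto
    also have "\<dots> \<le> x^u * 8^u / fact (2*u+1) / (of_nat t + 1)"
      using x0 by (intro divide_right_mono mult_left_mono) auto
    also have "x^u * 8^u / fact (2*u+1) = q^u * 20^u / fact (2*u+1)"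
      unfolding x_def q_def by (simp add: power_mult_distrib[symmetric])
    also have "\<dots> \<le> q^u * (10/3)"
    proof -
      have "3 * (20::real)^u \<le> 10 * fact (2*u+1)" using False by (intro fact_bound) simp
      then have "(20::real)^u / fact (2*u+1) \<le> 10/3"
        by (subst pos_divide_le_eq[OF fact_gt_zero]) linarith
      then have "q^u * ((20::real)^u / fact (2*u+1)) \<le> q^u * (10/3)"
        using q0 by (intro mult_left_mono) auto
      then show ?thesis by (simp add: times_divide_eq_right)
    qed
    finally show ?thesis using False unfolding h_def
      by (simp add: divide_right_mono mult.commute)
  qed
  have up: "Q \<le> 10/3 / (1 - q) / (of_nat t + 1) - 10/3 / (of_nat t + 1)"
  proof (rule sums_le[OF _ Qs hs])
    fix n
    show "- (x^n * ep n t) / (fact (2*n+1) * bt t) \<le> h n"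
      using tb[of n] abs_le_iff by blast
  qed
  have lo: "- (10/3 / (1 - q) / (of_nat t + 1) - 10/3 / (of_nat t + 1)) \<le> Q"
  proof (rule sums_le[OF _ sums_minus[OF hs] Qs])
    fix n
    have "- (- (x^n * ep n t) / (fact (2*n+1) * bt t)) \<le> h n"
      using tb[of n] abs_le_iff by blast
    then show "- h n \<le> - (x^n * ep n t) / (fact (2*n+1) * bt t)" by linarith
  qed
  have key: "10/3 / (1 - q) / (of_nat t + 1) - 10/3 / (of_nat t + 1) < 1 / (of_nat t + 1)"
  proof -
    have "10/3 / (1 - q) - 10/3 < 1" using q0 q1 by (simp add: field_simps)
    then have "(10/3 / (1 - q) - 10/3) / (of_nat t + 1) < 1 / (of_nat t + 1)"
      by (intro divide_strict_right_mono) auto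
    then show ?thesis by (simp add: diff_divide_distrib)
  qed
  have tt: "1 / (of_nat t + 1) < 1 / real t" using assms by (simp add: frac_less2)
  have tt2: "- 11 / (10 * real t) < - (1 / real t)" using assms by (simp add: field_simps)
  show ?thesis unfolding Q_def[symmetric] using up lo key tt tt2 by linarith
qed

end
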